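(* Let $0<s\le1$ and let $\beta\in(1,2)$ be such that the $\beta$-expansion of $1$ terminates; fix $m\in\mathbb N$, $\bar p\in[0,1]^{2^m}$ and $\epsilon>0$. Suppose there are a strictly increasing sequence $(M_k)$ of natural numbers and $0\le c<1$ such that $N^s_\infty\big([0,1)\cap G^{\beta,m}_{\bar p}(M_k,\epsilon)\big)<c$ for all $k$. Then for each cylinder $C$ of $f_\beta$ which is a scaling of $[0,1)$ (i.e. if $C$ has generation $n$ then $f_\beta^n$ maps $C$ onto $[0,1)$, so that $C$ is an affine copy of $[0,1)$ of length $\beta^{-n}$), there is $K_C$ such that $N^s_\infty\big(C\cap G^{\beta,m}_{\bar p}(M_k,\epsilon/2)\big)<c|C|^s$ for all $k>K_C$.
   Context: For $\beta\in(1,2)$ let $f_\beta(x)=\beta x \bmod 1$ on $[0,1)$ and $d_n(x,\beta)=\lfloor \beta f_\beta^n(x)\rfloor$, $n\ge0$; $(x_n)_{n\ge0}=(d_n(x,\beta))_{n\ge0}\in\{0,1\}^{\mathbb N}$ is the $\beta$-expansion of $x$. The expansion of $1$ terminates if $d(1,\beta)=j_0\dots j_{k-1}0^\infty$. A cylinder of generation $n$ is a nonempty set $[i_0\cdots i_{n-1}]=\{x\in[0,1): d_k(x,\beta)=i_k,\ 0\le k<n\}$. For a word $w$ of length $m$ and $n>m$, $\tau^\beta_w(x,n)=\#\{i\in\{0,\dots,n-m-1\}: x_i\dots x_{i+m-1}=w\}$; enumerating binary words of length $m$ as $w_1,\dots,w_{2^m}$, $G^{\beta,m}_{\bar p}(n,\epsilon)=\{x\in[0,1):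 p_{w_j}-\epsilon<\tau^\beta_{w_j}(x,n)/(n-m)<p_{w_j}+\epsilon,\ j=1,\dots,2^m\}$. $N^s_\infty(F)=\inf\{\sum_i|C_i|^s: F\subset\bigcup_iC_i\}$, the infimum over countable covers by cylinders of $f_\beta$. *)

theory Defs
  imports "HOL-Analysis.Analysis"
begin

definition fbeta :: "real \<Rightarrow> real \<Rightarrow> real" where
  "fbeta \<beta> x = frac (\<beta> * x)"

definition bdigit :: "real \<Rightarrow> real \<Rightarrow> nat \<Rightarrow> int" where
  "bdigit \<beta> x n = \<lfloor>\<beta> * (fbeta \<beta> ^^ n) x\<rfloor>"

definition expansion_of_one_terminates :: "real \<Rightarrow> bool" where
  "expansion_of_one_terminates \<beta> \<longleftrightarrow> (\<exists>k. \<forall>n\<ge>k. bdigit \<beta> 1 n = 0)"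

definition is_cylinder :: "real \<Rightarrow> nat \<Rightarrow> real set \<Rightarrow> bool" where
  "is_cylinder \<beta> n C \<longleftrightarrow>
     (\<exists>i :: nat \<Rightarrow> int. C = {x \<in> {0..<1}. \<forall>k<n. bdigit \<beta> x k = i k}) \<and> C \<noteq> {}"

definition binary_word :: "nat \<Rightarrow> int list \<Rightarrow> bool" where
  "binary_word m w \<longleftrightarrow> length w = m \<and> set w \<subseteq> {0, 1}"

definition tau :: "real \<Rightarrow> int list \<Rightarrow> real \<Rightarrow> nat \<Rightarrow> nat" where
  "tau \<beta> w x n = card {i. i < n - length w \<and>
       (\<forall>j < length w. bdigit \<beta> x (i + j) = w ! j)}"

definition Gset :: "real \<Rightarrow> nat \<Rightarrow> (int list \<Rightarrow> real) \<Rightarrow> nat \<Rightarrow> real \<Rightarrow> real set" where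
  "Gset \<beta> m p n eps = {x \<in> {0..<1}. \<forall>w. binary_word m w \<longrightarrow>
       (p w - eps < real (tau \<beta> w x n) / (real n - real m) \<and>
        real (tau \<beta> w x n) / (real n - real m) < p w + eps)}"

(* N^s_infinity(F): infimum of sum |C_i|^s over countable covers of F by cylinders
  (finite covers are encoded by padding with empty sets, which contribute 0). *)
definition Ns_inf :: "real \<Rightarrow> real \<Rightarrow> real set \<Rightarrow> ennreal" where
  "Ns_inf \<beta> s F = (INF C \<in> {C :: nat \<Rightarrow> real set.
        (\<forall>i. C i = {} \<or> (\<exists>n. is_cylinder \<beta> n (C i))) \<and> F \<subseteq> (\<Union>i. C i)}.
        (\<Sum>i. ennreal (diameter (C i) powr s)))"

end

theory Submission
  imports Defs
begin
lemma digit_shift: "bdigit \<beta> x (n + j) = bdigit \<beta> ((fbeta \<beta> ^^ n) x) j"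
  unfolding bdigit_def by (simp add: funpow_add add.commute)

lemma fpow_range: "x \<in> {0..<1} \<Longrightarrow> (fbeta \<beta> ^^ n) x \<in> {0..<1}"
  by (cases n) (auto simp: fbeta_def frac_lt_1)

fun Aoff :: "real \<Rightarrow> (nat \<Rightarrow> int) \<Rightarrow> nat \<Rightarrow> real" where
  "Aoff \<beta> i 0 = 0"
| "Aoff \<beta> i (Suc k) = \<beta> * Aoff \<beta> i k + of_int (i k)"

lemma fpow_affine:
  "(\<forall>k<n. bdigit \<beta> x k = i k) \<Longrightarrow> (fbeta \<beta> ^^ n) x = \<beta>^n * x - Aoff \<beta> i n"
proof (induction n)
  case 0 then show ?case by simp
next
  case (Suc n)
  have h: "(fbeta \<beta> ^^ n) x = \<beta>^n * x - Aoff \<beta> i n" using Suc by auto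
  have d: "bdigit \<beta> x n = i n" using Suc.prems by auto
  have "(fbeta \<beta> ^^ Suc n) x = \<beta> * (fbeta \<beta> ^^ n) x - of_int (bdigit \<beta> x n)"
    by (simp add: fbeta_def bdigit_def frac_def)
  also have "\<dots> = \<beta>^Suc n * x - Aoff \<beta> i (Suc n)" by (simp only: h d) (simp add: algebra_simps)
  finally show ?case .
qed

lemma diam_affine:
  fixes P :: "real set"
  assumes "bounded P" "bounded (g ` P)" "r > 0" "\<And>x y. x \<in> P \<Longrightarrow> y \<in> P \<Longrightarrow> \<bar>g x - g y\<bar> = r * \<bar>x - y\<bar>"
  shows "diameter (g ` P) = r * diameter P"
proof (rule antisym)
  show "diameter (g ` P) \<le> r * diameter P"
  proof (rule diameter_le)
    show "g ` P \<noteq> {} \<or> 0 \<le> r * diameter P" using assms diameter_ge_0 by auto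
    fix u v assume "u \<in> g ` P" "v \<in> g ` P"
    then obtain x y where "x \<in> P" "y \<in> P" "u = g x" "v = g y" by auto
    then show "norm (u - v) \<le> r * diameter P"
      using assms(4)[of x y] diameter_bounded_bound[OF assms(1), of x y] assms(3)
      by (simp add: dist_real_def)
  qed
  have "diameter P \<le> diameter (g ` P) / r"
  proof (rule diameter_le)
    show "P \<noteq> {} \<or> 0 \<le> diameter (g ` P) / r" using assms diameter_ge_0 by auto
    fix x y assume "x \<in> P" "y \<in> P"
    then have "\<bar>g x - g y\<bar> \<le> diameter (g ` P)"
      using diameter_bounded_bound[OF assms(2), of "g x" "g y"] by (simp add: dist_real_def)
    then show "norm (x - y) \<le> diameter (g ` P) / r"
      using assms(4)[OF \<open>x\<in>P\<close> \<open>y\<in>P\<close>] assms(3) by (simp add: field_simps)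
  qed
  then show "r * diameter P \<le> diameter (g ` P)" using assms(3) by (simp add: field_simps)
qed

lemma diam_unit: "diameter {0..<1::real} = 1"
proof -
  have "diameter (closure {0..<1::real}) = diameter {0..<1::real}"
    by (rule diameter_closure) auto
  then show ?thesis by simp
qed

lemma card_shift1:
  "card {i. i < L \<and> Q i} \<le> card {i. i < L \<and> Q (n + i)} + n"
proof -
  have "{i. i < L \<and> Q i} \<subseteq> (\<lambda>i. n + i) ` {i. i < L \<and> Q (n + i)} \<union> {..<n}"
  proof
    fix i assume "i \<in> {i. i < L \<and> Q i}"
    then show "i \<in> (\<lambda>i. n + i) ` {i. i < L \<and> Q (n + i)} \<union> {..<n}"
      by (cases "i < n") (auto intro!: image_eqI[of _ _ "i - n"])
  qed
  then have "card {i. i < L \<and> Q i} \<le> card ((\<lambda>i. n + i) ` {i. i < L \<and> Q (n + i)} \<union> {..<n})"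
    by (intro card_mono) auto
  also have "\<dots> \<le> card ((\<lambda>i. n + i) ` {i. i < L \<and> Q (n + i)}) + card {..<n}"
    by (rule card_Un_le)
  also have "\<dots> \<le> card {i. i < L \<and> Q (n + i)} + n"
    using card_image_le[of "{i. i < L \<and> Q (n + i)}" "\<lambda>i. n + i"] by simp
  finally show ?thesis .
qed

lemma card_shift2:
  "card {i. i < L \<and> Q (n + i)} \<le> card {i. i < L \<and> Q i} + n"
proof -
  have "card {i. i < L \<and> Q (n + i)} = card ((\<lambda>i. n + i) ` {i. i < L \<and> Q (n + i)})"
    by (rule card_image[symmetric]) (auto simp: inj_on_def)
  also have "\<dots> \<le> card ({i. i < L \<and> Q i} \<union> {L..<L+n})"
    by (intro card_mono) auto
  also have "\<dots> \<le> card {i. i < L \<and> Q i} + card {L..<L+n}" by (rule card_Un_le)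
  finally show ?thesis by simp
qed

lemma tau_shift:
  "real (tau \<beta> w ((fbeta \<beta> ^^ n) x) N) \<le> real (tau \<beta> w x N) + n"
  "real (tau \<beta> w x N) \<le> real (tau \<beta> w ((fbeta \<beta> ^^ n) x) N) + n"
proof -
  define Q where "Q = (\<lambda>i. \<forall>j < length w. bdigit \<beta> x (i + j) = w ! j)"
  have e1: "tau \<beta> w x N = card {i. i < N - length w \<and> Q i}" unfolding tau_def Q_def ..
  have e2: "tau \<beta> w ((fbeta \<beta> ^^ n) x) N = card {i. i < N - length w \<and> Q (n + i)}"
    unfolding tau_def Q_def by (simp add: digit_shift[symmetric] add.assoc)
  show "real (tau \<beta> w ((fbeta \<beta> ^^ n) x) N) \<le> real (tau \<beta> w x N) + n"
    using card_shift2[of "N - length w" Q n] unfolding e1 e2 by linarith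
  show "real (tau \<beta> w x N) \<le> real (tau \<beta> w ((fbeta \<beta> ^^ n) x) N) + n"
    using card_shift1[of "N - length w" Q n] unfolding e1 e2 by linarith
qed


lemma cyl_pre:
  assumes C: "C = {x \<in> {0..<1}. \<forall>k<n. bdigit \<beta> x k = i k}"
    and onto: "(fbeta \<beta> ^^ n) ` C = {0..<1}"
    and D: "is_cylinder \<beta> l D"
  shows "is_cylinder \<beta> (n + l) (C \<inter> (fbeta \<beta> ^^ n) -` D)"
proof -
  obtain j where Dj: "D = {y \<in> {0..<1}. \<forall>t<l. bdigit \<beta> y t = j t}" and Dne: "D \<noteq> {}"
    using D unfolding is_cylinder_def by blast
  define i' where "i' = (\<lambda>k. if k < n then i k else j (k - n))"
  have eq: "C \<inter> (fbeta \<beta> ^^ n) -` D = {x \<in> {0..<1}. \<forall>k<n+l. bdigit \<beta> x k = i' k}"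
  proof (intro set_eqI iffI)
    fix x assume x: "x \<in> C \<inter> (fbeta \<beta> ^^ n) -` D"
    show "x \<in> {x \<in> {0..<1}. \<forall>k<n+l. bdigit \<beta> x k = i' k}"
    proof (safe)
      show "x \<in> {0..<1}" using x C by auto
    next
      fix k assume k: "k < n + l"
      show "bdigit \<beta> x k = i' k"
      proof (cases "k < n")
        case True then show ?thesis using x C by (auto simp: i'_def)
      next
        case False
        then have "k = n + (k - n)" by simp
        then have "bdigit \<beta> x k = bdigit \<beta> ((fbeta \<beta> ^^ n) x) (k - n)"
          by (metis digit_shift)
        also have "\<dots> = j (k - n)" using x Dj k False by auto
        finally show ?thesis using False by (simp add: i'_def)
      qed
    qed
  next
    fix x assume x: "x \<in> {x \<in> {0..<1}. \<forall>k<n+l. bdigit \<beta> x k = i' k}"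
    have "x \<in> C" using x C by (auto simp: i'_def)
    moreover have "(fbeta \<beta> ^^ n) x \<in> D"
    proof -
      have "(fbeta \<beta> ^^ n) x \<in> {0..<1}" using x fpow_range by blast
      moreover have "\<forall>t<l. bdigit \<beta> ((fbeta \<beta> ^^ n) x) t = j t"
      proof (intro allI impI)
        fix t assume "t < l"
        then have "bdigit \<beta> x (n + t) = i' (n + t)" using x by auto
        then show "bdigit \<beta> ((fbeta \<beta> ^^ n) x) t = j t"
          by (simp add: digit_shift i'_def)
      qed
      ultimately show ?thesis using Dj by auto
    qed
    ultimately show "x \<in> C \<inter> (fbeta \<beta> ^^ n) -` D" by auto
  qed
  have ne: "C \<inter> (fbeta \<beta> ^^ n) -` D \<noteq> {}"
  proof -
    obtain y where "y \<in> D" using Dne by auto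
    then have "y \<in> (fbeta \<beta> ^^ n) ` C" using onto Dj by auto
    then obtain x where "x \<in> C" "(fbeta \<beta> ^^ n) x = y" by auto
    then show ?thesis using \<open>y \<in> D\<close> by auto
  qed
  show ?thesis unfolding is_cylinder_def using eq ne by blast
qed

lemma freq:
  fixes n :: nat and x :: real
  assumes x: "x \<in> Gset \<beta> m p N (eps / 2)" and eps: "0 < eps"
    and N: "real N > real m + 2 * real n / eps"
  shows "(fbeta \<beta> ^^ n) x \<in> Gset \<beta> m p N eps"
proof -
  have x01: "x \<in> {0..<1}" using x unfolding Gset_def by auto
  define D where "D = real N - real m"
  have Dpos: "D > 0" using N eps D_def
    by (smt (verit) divide_nonneg_pos of_nat_0_le_iff)
  have nD: "real n / D < eps / 2"
  proof -
    have "2 * real n / eps < D" using N D_def by simp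
    then have "2 * real n < D * eps" using eps by (simp add: field_simps)
    then show ?thesis using Dpos by (simp add: field_simps)
  qed
  have "\<forall>w. binary_word m w \<longrightarrow>
       (p w - eps < real (tau \<beta> w ((fbeta \<beta> ^^ n) x) N) / D \<and>
        real (tau \<beta> w ((fbeta \<beta> ^^ n) x) N) / D < p w + eps)"
  proof (intro allI impI)
    fix w assume w: "binary_word m w"
    have xw: "p w - eps/2 < real (tau \<beta> w x N) / D \<and> real (tau \<beta> w x N) / D < p w + eps/2"
      using x w unfolding Gset_def D_def by auto
    define a where "a = real (tau \<beta> w ((fbeta \<beta> ^^ n) x) N)"
    define b where "b = real (tau \<beta> w x N)"
    have ab: "a \<le> b + n" "b \<le> a + n" using tau_shift[where \<beta>=\<beta> and w=w and n=n and x=x and N=N] a_def b_def by auto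
    have "a / D \<le> b / D + n / D" using ab Dpos by (simp add: add_divide_distrib[symmetric] divide_right_mono)
    moreover have "b / D \<le> a / D + n / D" using ab Dpos by (simp add: add_divide_distrib[symmetric] divide_right_mono)
    moreover have "p w - eps/2 < b / D" "b / D < p w + eps/2" using xw b_def by auto
    ultimately show "p w - eps < a / D \<and> a / D < p w + eps" using nD by linarith
  qed
  then show ?thesis using fpow_range[OF x01] unfolding Gset_def D_def by auto
qed


theorem mainTheorem14:
  fixes s \<beta> eps c :: real and m :: nat and p :: "int list \<Rightarrow> real" and M :: "nat \<Rightarrow> nat"
  assumes "0 < s" and "s \<le> 1"
    and "1 < \<beta>" and "\<beta> < 2"
    and "expansion_of_one_terminates \<beta>"
    and "\<forall>w. binary_word m w \<longrightarrow> p w \<in> {0..1}"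
    and "0 < eps"
    and "strict_mono M"
    and "0 \<le> c" and "c < 1"
    and "\<forall>k. Ns_inf \<beta> s ({0..<1} \<inter> Gset \<beta> m p (M k) eps) < ennreal c"
  shows "\<forall>C n. is_cylinder \<beta> n C \<and> (fbeta \<beta> ^^ n) ` C = {0..<1} \<longrightarrow>
           (\<exists>K. \<forall>k>K. Ns_inf \<beta> s (C \<inter> Gset \<beta> m p (M k) (eps / 2))
                        < ennreal (c * diameter C powr s))"
proof (intro allI impI)
  fix C n assume H: "is_cylinder \<beta> n C \<and> (fbeta \<beta> ^^ n) ` C = {0..<1}"
  obtain i where Ci: "C = {x \<in> {0..<1}. \<forall>k<n. bdigit \<beta> x k = i k}"
    using H unfolding is_cylinder_def by blast
  have onto: "(fbeta \<beta> ^^ n) ` C = {0..<1}" using H by blast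
  define g where "g = fbeta \<beta> ^^ n"
  have bpos: "\<beta>^n > 0" using assms(3) by simp
  have gaff: "g x = \<beta>^n * x - Aoff \<beta> i n" if "x \<in> C" for x
    using fpow_affine[of n \<beta> x i] that Ci g_def by auto
  have gd: "\<bar>g x - g y\<bar> = \<beta>^n * \<bar>x - y\<bar>" if "x \<in> C" "y \<in> C" for x y
    using gaff[OF that(1)] gaff[OF that(2)] bpos
    by (simp add: right_diff_distrib[symmetric] abs_mult)
  have Csub: "C \<subseteq> {0..<1}" using Ci by auto
  have bC: "bounded C" by (rule bounded_subset[OF _ Csub]) auto
  have diam_img: "diameter (g ` P) = \<beta>^n * diameter P" if "P \<subseteq> C" for P
  proof (rule diam_affine)
    show "bounded P" using bounded_subset[OF bC that] .
    have "g ` P \<subseteq> {0..<1}" using that onto g_def by auto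
    then show "bounded (g ` P)" by (rule bounded_subset[rotated]) auto
  qed (use bpos gd that in auto)
  have diamC: "diameter C = 1 / \<beta>^n"
  proof -
    have "diameter C * \<beta>^n = 1" using diam_img[of C] onto diam_unit bpos g_def by (simp add: field_simps)
    then show ?thesis using bpos by (metis nonzero_mult_div_cancel_right order_less_irrefl)
  qed
  define B where "B = (\<beta>^n) powr s"
  have Bpos: "B > 0" using bpos B_def by (metis powr_gt_zero order_less_irrefl)
  have cC: "c * diameter C powr s = c / B"
    unfolding diamC B_def by (simp add: powr_divide)
  obtain K :: nat where K: "real K > real m + 2 * real n / eps"
    using reals_Archimedean2 by blast
  show "\<exists>K. \<forall>k>K. Ns_inf \<beta> s (C \<inter> Gset \<beta> m p (M k) (eps / 2)) < ennreal (c * diameter C powr s)"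
  proof (intro exI allI impI)
    fix k assume kK: "K < k"
    have "k \<le> M k" using seq_suble[OF assms(8)] .
    then have N: "real (M k) > real m + 2 * real n / eps" using kK K by linarith
    have "Ns_inf \<beta> s ({0..<1} \<inter> Gset \<beta> m p (M k) eps) < ennreal c" using assms(11) by blast
    then obtain D where Dcov: "\<forall>j. D j = {} \<or> (\<exists>l. is_cylinder \<beta> l (D j))"
      and Dsub: "{0..<1} \<inter> Gset \<beta> m p (M k) eps \<subseteq> (\<Union>j. D j)"
      and Dsum: "(\<Sum>j. ennreal (diameter (D j) powr s)) < ennreal c"
      unfolding Ns_inf_def INF_less_iff by blast
    define P where "P = (\<lambda>j. C \<inter> g -` D j)"
    have D01: "D j \<subseteq> {0..<1}" for j
      using Dcov[rule_format, of j] unfolding is_cylinder_def by auto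
    have Pcyl: "\<forall>j. P j = {} \<or> (\<exists>l. is_cylinder \<beta> l (P j))"
    proof
      fix j show "P j = {} \<or> (\<exists>l. is_cylinder \<beta> l (P j))"
      proof (cases "D j = {}")
        case True then show ?thesis by (simp add: P_def)
      next
        case False
        then obtain l where "is_cylinder \<beta> l (D j)" using Dcov by blast
        from cyl_pre[OF Ci onto this] show ?thesis unfolding P_def g_def by blast
      qed
    qed
    have Pcov: "C \<inter> Gset \<beta> m p (M k) (eps / 2) \<subseteq> (\<Union>j. P j)"
    proof
      fix x assume x: "x \<in> C \<inter> Gset \<beta> m p (M k) (eps / 2)"
      then have "g x \<in> Gset \<beta> m p (M k) eps" using freq[OF _ assms(7) N] g_def by blast
      moreover have "g x \<in> {0..<1}" using x onto g_def by auto
      ultimately obtain j where "g x \<in> D j" using Dsub by blast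
      then show "x \<in> (\<Union>j. P j)" using x P_def by auto
    qed
    have gP: "g ` P j = D j" for j
    proof
      show "g ` P j \<subseteq> D j" unfolding P_def by auto
      show "D j \<subseteq> g ` P j"
      proof
        fix y assume y: "y \<in> D j"
        then have "y \<in> g ` C" using D01[of j] onto g_def by auto
        then obtain x where "x \<in> C" "g x = y" by auto
        then show "y \<in> g ` P j" using y P_def by auto
      qed
    qed
    have diamP: "diameter (P j) = diameter (D j) / \<beta>^n" for j
      using diam_img[of "P j"] gP[of j] bpos P_def assms(3) by (simp add: field_simps)
    have Dge: "0 \<le> diameter (D j)" for j
      by (rule diameter_ge_0, rule bounded_subset[OF _ D01]) auto
    have eqj: "ennreal (diameter (P j) powr s) = ennreal (1 / B) * ennreal (diameter (D j) powr s)" for j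
    proof -
      have "diameter (P j) powr s = (1 / B) * diameter (D j) powr s"
        unfolding diamP B_def by (simp add: powr_divide)
      then show ?thesis using Bpos by (simp only: ennreal_mult[symmetric]) (auto simp: ennreal_mult[symmetric])
    qed
    have "Ns_inf \<beta> s (C \<inter> Gset \<beta> m p (M k) (eps / 2)) \<le> (\<Sum>j. ennreal (diameter (P j) powr s))"
      unfolding Ns_inf_def by (rule INF_lower) (use Pcyl Pcov in blast)
    also have "\<dots> = ennreal (1 / B) * (\<Sum>j. ennreal (diameter (D j) powr s))"
      by (simp only: eqj ennreal_suminf_cmult)
    also have "\<dots> < ennreal (1 / B) * ennreal c"
      by (rule ennreal_mult_strict_left_mono[OF Dsum]) (use Bpos in auto)
    also have "\<dots> = ennreal (c * diameter C powr s)"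
      unfolding cC using Bpos assms(9) by (simp add: ennreal_mult[symmetric])
    finally show "Ns_inf \<beta> s (C \<inter> Gset \<beta> m p (M k) (eps / 2)) < ennreal (c * diameter C powr s)" .
  qed
qed

end
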